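(* Let $D$ be the minimal Dress ring of $\mathbb{R}(X)$ and let $J$ be the ideal of $D$ generated by a family $(r_i)_{i\in\Lambda}$ of elements of $D$. Then $J^2$ is the ideal generated by $(r_i^2)_{i\in\Lambda}$.
   Context: $D$ denotes the minimal Dress ring of the field $\mathbb{R}(X)$, i.e. the subring of $\mathbb{R}(X)$ generated by $\mathbb{Z}$ and all elements $1/(1+h^2)$ with $h\in\mathbb{R}(X)$. *)

theory Defs
  imports "HOL-Computational_Algebra.Polynomial" "HOL-Computational_Algebra.Fraction_Field"
begin

type_synonym ratfun = "real poly fract"

inductive_set minimal_dress_ring :: "ratfun set" where
  one: "1 \<in> minimal_dress_ring"
| gen: "1 / (1 + h^2) \<in> minimal_dress_ring"
| add: "a \<in> minimal_dress_ring \<Longrightarrow> b \<in> minimal_dress_ring \<Longrightarrow> a + b \<in> minimal_dress_ring"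
| neg: "a \<in> minimal_dress_ring \<Longrightarrow> - a \<in> minimal_dress_ring"
| mult: "a \<in> minimal_dress_ring \<Longrightarrow> b \<in> minimal_dress_ring \<Longrightarrow> a * b \<in> minimal_dress_ring"

definition ideal_gen :: "'a::comm_ring_1 set \<Rightarrow> 'a set \<Rightarrow> 'a set" where
  "ideal_gen R S = {x. \<exists>F c. finite F \<and> F \<subseteq> S \<and> (\<forall>s\<in>F. c s \<in> R) \<and> x = (\<Sum>s\<in>F. c s * s)}"

definition ideal_prod :: "'a::comm_ring_1 set \<Rightarrow> 'a set \<Rightarrow> 'a set \<Rightarrow> 'a set" where
  "ideal_prod R I J = ideal_gen R {a * b | a b. a \<in> I \<and> b \<in> J}"

end

theory Submission imports Defs begin

lemma poly_sq_sum_zero: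
  fixes p q :: "real poly"
  assumes "p^2 + q^2 = 0" shows "p = 0"
proof -
  have "\<forall>x. poly p x = 0"
  proof
    fix x
    have "(poly p x)^2 + (poly q x)^2 = 0"
      using arg_cong[OF assms, of "\<lambda>f. poly f x"] by simp
    then show "poly p x = 0" by (simp add: add_nonneg_eq_0_iff)
  qed
  then show ?thesis using poly_all_0_iff_0 by blast
qed

lemma one_plus_sq_ne0: "1 + (h::ratfun)^2 \<noteq> 0"
proof (cases h)
  case (Fract a b)
  have "1 + h^2 = Fract (b*b + a*a) (b*b)"
    using Fract by (simp add: power2_eq_square One_fract_def algebra_simps)
  moreover have "b*b + a*a \<noteq> 0"
    using poly_sq_sum_zero[of b a] Fract by (auto simp: power2_eq_square)
  ultimately show ?thesis using Fract by (simp add: Zero_fract_def eq_fract)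
qed

lemma two_ne0: "(2::ratfun) \<noteq> 0"
proof -
  have "(2::ratfun) = Fract 2 1" by (metis of_nat_fract of_nat_numeral)
  moreover have "Fract 0 1 \<noteq> (Fract 2 1::ratfun)" by (simp add: eq_fract)
  ultimately show ?thesis by (simp add: Zero_fract_def)
qed

abbreviation "D \<equiv> minimal_dress_ring"

lemma D_zero: "0 \<in> D"
  using minimal_dress_ring.add[OF minimal_dress_ring.one minimal_dress_ring.neg[OF minimal_dress_ring.one]] by simp

lemma D_diff: "a \<in> D \<Longrightarrow> b \<in> D \<Longrightarrow> a - b \<in> D"
  using minimal_dress_ring.add[OF _ minimal_dress_ring.neg] by (metis diff_conv_add_uminus)

lemma D_half: "1/2 \<in> D"
  using minimal_dress_ring.gen[of 1] by simp

lemma D_frac: "h/(1+h^2) \<in> D"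
proof (cases "h = -1")
  case True
  have "h/(1+h^2) = - (1/2)" using True by simp
  then show ?thesis using minimal_dress_ring.neg[OF D_half] by simp
next
  case False
  define g where "g = (h-1)/(h+1)"
  have h1: "h + 1 \<noteq> 0" using False by (simp add: add_eq_0_iff2)
  have h2: "1 + h^2 \<noteq> 0" by (rule one_plus_sq_ne0)
  have h3: "1 + g^2 \<noteq> 0" by (rule one_plus_sq_ne0)
  have a: "1+g^2 = 2*(1+h^2)/(h+1)^2"
    unfolding g_def using h1 by (simp add: power_divide add_divide_eq_iff) (simp add: power2_eq_square algebra_simps)
  have b: "1/(1+g^2) = (h+1)^2/(2*(1+h^2))" using a by simp
  have "h/(1+h^2) = 1/(1+g^2) - 1/2"
    unfolding b using h2 two_ne0 by (simp add: diff_divide_eq_iff divide_simps) (simp add: power2_eq_square algebra_simps)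
  then show ?thesis using D_diff[OF minimal_dress_ring.gen D_half] by simp
qed

lemma ideal_zero: "0 \<in> ideal_gen D S"
  unfolding ideal_gen_def by (rule CollectI, rule exI[of _ "{}"]) simp

lemma ideal_gen_mem: "s \<in> S \<Longrightarrow> s \<in> ideal_gen D S"
  unfolding ideal_gen_def
  by (rule CollectI, rule exI[of _ "{s}"], rule exI[of _ "\<lambda>_. 1"]) (simp add: minimal_dress_ring.one)

lemma ideal_mult: "d \<in> D \<Longrightarrow> x \<in> ideal_gen D S \<Longrightarrow> d * x \<in> ideal_gen D S"
  unfolding ideal_gen_def
proof clarify
  fix F c assume "d \<in> D" "finite F" "F \<subseteq> S" "\<forall>s\<in>F. c s \<in> D"
  then show "\<exists>F' c'. finite F' \<and> F' \<subseteq> S \<and> (\<forall>s\<in>F'. c' s \<in> D) \<and> d * (\<Sum>s\<in>F. c s * s) = (\<Sum>s\<in>F'. c' s * s)"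
    by (intro exI[of _ F] exI[of _ "\<lambda>s. d * c s"])
       (auto simp: sum_distrib_left mult.assoc intro: minimal_dress_ring.mult)
qed

lemma ideal_add: "x \<in> ideal_gen D S \<Longrightarrow> y \<in> ideal_gen D S \<Longrightarrow> x + y \<in> ideal_gen D S"
  unfolding ideal_gen_def
proof clarify
  fix F c G e assume F: "finite F" "F \<subseteq> S" "\<forall>s\<in>F. c s \<in> D"
    and G: "finite G" "G \<subseteq> S" "\<forall>s\<in>G. e s \<in> D"
  define c' where "c' s = (if s \<in> F then c s else 0)" for s
  define e' where "e' s = (if s \<in> G then e s else 0)" for s
  have 1: "(\<Sum>s\<in>F. c s * s) = (\<Sum>s\<in>F\<union>G. c' s * s)"
    by (rule sum.mono_neutral_cong_left) (use F G in \<open>auto simp: c'_def\<close>)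
  have 2: "(\<Sum>s\<in>G. e s * s) = (\<Sum>s\<in>F\<union>G. e' s * s)"
    by (rule sum.mono_neutral_cong_left) (use F G in \<open>auto simp: e'_def\<close>)
  have 3: "\<forall>s\<in>F\<union>G. c' s + e' s \<in> D"
    using F G D_zero by (auto simp: c'_def e'_def intro: minimal_dress_ring.add)
  show "\<exists>F' c''. finite F' \<and> F' \<subseteq> S \<and> (\<forall>s\<in>F'. c'' s \<in> D) \<and> (\<Sum>s\<in>F. c s * s) + (\<Sum>s\<in>G. e s * s) = (\<Sum>s\<in>F'. c'' s * s)"
    using F G 3 by (intro exI[of _ "F\<union>G"] exI[of _ "\<lambda>s. c' s + e' s"])
       (simp add: 1 2 sum.distrib[symmetric] distrib_right)
qed

lemma ideal_sum: "finite F \<Longrightarrow> (\<forall>s\<in>F. f s \<in> ideal_gen D S) \<Longrightarrow> sum f F \<in> ideal_gen D S"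
  by (induction F rule: finite_induct) (auto simp: ideal_zero ideal_add)

lemma ideal_sub: "T \<subseteq> ideal_gen D S \<Longrightarrow> ideal_gen D T \<subseteq> ideal_gen D S"
proof
  fix x assume T: "T \<subseteq> ideal_gen D S" and "x \<in> ideal_gen D T"
  then obtain F c where "finite F" "F \<subseteq> T" "\<forall>s\<in>F. c s \<in> D" "x = (\<Sum>s\<in>F. c s * s)"
    unfolding ideal_gen_def by blast
  then show "x \<in> ideal_gen D S" using T by (auto intro!: ideal_sum ideal_mult)
qed

lemma key: "a * b \<in> ideal_gen D {a^2, b^2}"
proof (cases "b = 0")
  case True then show ?thesis using ideal_zero by simp
next
  case False
  define h where "h = a/b"
  define e where "e = h/(1+h^2)"
  have eD: "e \<in> D" unfolding e_def by (rule D_frac)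
  have ha: "a = h * b" unfolding h_def using False by simp
  have "e * a^2 + e * b^2 = e * (1 + h^2) * b^2" unfolding ha by (simp add: algebra_simps power2_eq_square)
  also have "\<dots> = h * b^2" unfolding e_def using one_plus_sq_ne0[of h] by simp
  also have "\<dots> = a * b" unfolding ha by (simp add: power2_eq_square)
  finally have "a * b = e * a^2 + e * b^2" by simp
  moreover have "e * a^2 + e * b^2 \<in> ideal_gen D {a^2, b^2}"
    by (intro ideal_add ideal_mult eD ideal_gen_mem) auto
  ultimately show ?thesis by simp
qed

theorem proposition2p2:
  fixes r :: "'i \<Rightarrow> ratfun" and \<Lambda> :: "'i set"
  assumes "\<forall>i\<in>\<Lambda>. r i \<in> minimal_dress_ring"
  shows "ideal_prod minimal_dress_ring (ideal_gen minimal_dress_ring (r ` \<Lambda>))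
                                        (ideal_gen minimal_dress_ring (r ` \<Lambda>))
         = ideal_gen minimal_dress_ring ((\<lambda>i. (r i)^2) ` \<Lambda>)"
proof -
  let ?I = "ideal_gen D (r ` \<Lambda>)"
  let ?K = "ideal_gen D ((\<lambda>i. (r i)^2) ` \<Lambda>)"
  have gens: "s * t \<in> ?K" if "s \<in> r ` \<Lambda>" "t \<in> r ` \<Lambda>" for s t
  proof -
    have "{s^2, t^2} \<subseteq> ?K" using that by (auto intro!: ideal_gen_mem)
    then show ?thesis using ideal_sub key by blast
  qed
  have prod1: "s * y \<in> ?K" if "s \<in> r ` \<Lambda>" "y \<in> ?I" for s y
  proof -
    obtain G e where G: "finite G" "G \<subseteq> r ` \<Lambda>" "\<forall>t\<in>G. e t \<in> D" "y = (\<Sum>t\<in>G. e t * t)"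
      using \<open>y \<in> ?I\<close> unfolding ideal_gen_def by blast
    have "s * y = (\<Sum>t\<in>G. e t * (s * t))" using G(4) by (simp add: sum_distrib_left algebra_simps)
    also have "\<dots> \<in> ?K"
      by (rule ideal_sum) (use G that gens in \<open>blast intro: ideal_mult\<close>)+
    finally show ?thesis .
  qed
  have prod: "x * y \<in> ?K" if "x \<in> ?I" "y \<in> ?I" for x y
  proof -
    obtain F c where F: "finite F" "F \<subseteq> r ` \<Lambda>" "\<forall>t\<in>F. c t \<in> D" "x = (\<Sum>t\<in>F. c t * t)"
      using \<open>x \<in> ?I\<close> unfolding ideal_gen_def by blast
    have "x * y = (\<Sum>s\<in>F. c s * (s * y))" unfolding F(4) sum_distrib_right by (simp add: algebra_simps)
    also have "\<dots> \<in> ?K"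
      by (rule ideal_sum) (use F that prod1 in \<open>blast intro: ideal_mult\<close>)+
    finally show ?thesis .
  qed
  have "ideal_prod D ?I ?I \<subseteq> ?K"
    unfolding ideal_prod_def by (rule ideal_sub) (clarify, rule prod)
  moreover have "?K \<subseteq> ideal_prod D ?I ?I"
    unfolding ideal_prod_def
  proof (rule ideal_sub, clarify)
    fix i assume "i \<in> \<Lambda>"
    then have "r i \<in> ?I" by (auto intro: ideal_gen_mem)
    then have "(r i)^2 \<in> {a * b |a b. a \<in> ?I \<and> b \<in> ?I}" by (auto simp: power2_eq_square)
    then show "(r i)^2 \<in> ideal_gen D {a * b |a b. a \<in> ?I \<and> b \<in> ?I}" by (rule ideal_gen_mem)
  qed
  ultimately show ?thesis by (rule equalityI)
qed
end
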